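(* There are infinitely many odd integers $n$ such that $\varphi(2^n-1)/(2^n-1)>1/3$, where $\varphi$ is Euler's totient function. *)

theory Defs
  imports "HOL-Number_Theory.Number_Theory"
begin

end

theory Submission
  imports Defs
begin

lemma prod_one_minus_ge:
  fixes x :: "'a \<Rightarrow> real"
  assumes "finite A" "\<And>a. a \<in> A \<Longrightarrow> 0 \<le> x a \<and> x a \<le> 1"
  shows "(\<Prod>a\<in>A. 1 - x a) \<ge> 1 - (\<Sum>a\<in>A. x a)"
  using assms
proof (induction A rule: finite_induct)
  case empty
  then show ?case by simp
next
  case (insert b F)
  have IH: "(\<Prod>a\<in>F. 1 - x a) \<ge> 1 - (\<Sum>a\<in>F. x a)" using insert by auto
  have xb: "0 \<le> x b" "x b \<le> 1" using insert by auto
  have S: "(\<Sum>a\<in>F. x a) \<ge> 0" using insert by (intro sum_nonneg) auto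
  have "(1 - x b) * (\<Prod>a\<in>F. 1 - x a) \<ge> (1 - x b) * (1 - (\<Sum>a\<in>F. x a))"
    using IH xb by (intro mult_left_mono) auto
  moreover have "(1 - x b) * (1 - (\<Sum>a\<in>F. x a)) \<ge> 1 - (x b + (\<Sum>a\<in>F. x a))"
    using xb S by (simp add: algebra_simps)
  ultimately show ?case using insert by simp
qed

lemma factor_large:
  fixes p q :: nat
  assumes p: "prime p" "odd p" and q: "prime q" "q dvd 2 ^ p - 1"
  shows "q \<ge> 2 * p + 1"
proof -
  have p1: "p \<ge> 1" using prime_gt_0_nat[OF p(1)] by simp
  have "odd (2 ^ p - 1 :: nat)" using p1 by simp
  hence qodd: "odd q" using q(2) by (meson dvd_trans)
  have q2: "q \<ge> 2" using prime_ge_2_nat[OF q(1)] .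
  have cong: "[2 ^ p = 1] (mod q)"
  proof -
    have "(2::nat) ^ p \<ge> 1" by simp
    then show ?thesis using q(2) by (simp add: cong_altdef_nat)
  qed
  have cop: "coprime q 2"
  proof (rule prime_imp_coprime[OF q(1)])
    show "\<not> q dvd 2"
    proof
      assume "q dvd 2"
      hence "q \<le> 2" by (simp add: dvd_imp_le)
      hence "q = 2" using q2 by simp
      then show False using qodd by simp
    qed
  qed
  have "ord q 2 dvd p" using cong ord_divides by blast
  moreover have "ord q 2 \<noteq> 1"
  proof
    assume "ord q 2 = 1"
    hence "[2 = 1] (mod q)" using ord_eq_Suc_0_iff by simp
    hence "q dvd 1" by (simp add: cong_altdef_nat)
    then show False using q2 by simp
  qed
  ultimately have "ord q 2 = p" using p(1) prime_nat_iff by blast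
  moreover have "ord q 2 dvd totient q" using cop order_divides_totient by blast
  ultimately have "p dvd q - 1" using q(1) totient_prime by simp
  then obtain k where k: "q - 1 = p * k" by auto
  have "even (q - 1)" using qodd q2 by simp
  hence "even (p * k)" unfolding k .
  hence "even k" using p(2) by simp
  moreover have "k \<noteq> 0"
  proof
    assume "k = 0"
    with k q2 show False by simp
  qed
  ultimately have "k \<ge> 2" by presburger
  hence "q - 1 \<ge> p * 2" using k by simp
  then show ?thesis using q2 by simp
qed

lemma ratio_big:
  fixes p :: nat
  assumes p: "prime p" "odd p"
  shows "real (totient (2 ^ p - 1)) / real (2 ^ p - 1) > 1 / 2"
proof -
  define m :: nat where "m = 2 ^ p - 1"
  have p1: "p \<ge> 1" using prime_gt_0_nat[OF p(1)] by simp
  have "(2::nat) ^ 1 \<le> 2 ^ p" using p1 by (intro power_increasing) auto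
  hence m0: "m \<noteq> 0" unfolding m_def by simp
  define P where "P = prime_factors m"
  have fin: "finite P" unfolding P_def by simp
  have big: "\<And>q. q \<in> P \<Longrightarrow> q \<ge> 2 * p + 1"
    unfolding P_def m_def using p factor_large by auto
  have "(\<Prod>q\<in>P. (2::nat)) \<le> (\<Prod>q\<in>P. q ^ multiplicity q m)"
  proof (intro prod_mono conjI)
    fix q assume qP: "q \<in> P"
    have "q \<ge> 2" using big[OF qP] p1 by simp
    moreover have "multiplicity q m \<ge> 1" using qP unfolding P_def
      by (simp add: prime_factors_multiplicity Suc_le_eq)
    ultimately have "q ^ 1 \<le> q ^ multiplicity q m"
      by (intro power_increasing) auto
    hence "q \<le> q ^ multiplicity q m" by simp
    then show "2 \<le> q ^ multiplicity q m" using \<open>q \<ge> 2\<close> by linarith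
  qed simp
  also have "\<dots> = m" unfolding P_def using prod_prime_factors[OF m0] by simp
  finally have "2 ^ card P \<le> m" by simp
  moreover have "(0::nat) < 2 ^ p" by simp
  ultimately have "2 ^ card P < (2::nat) ^ p" unfolding m_def by linarith
  hence cardP: "card P < p" using power_less_imp_less_exp[of 2] by simp
  have "(\<Sum>q\<in>P. 1 / real q) \<le> (\<Sum>q\<in>P. 1 / real (2 * p + 1))"
  proof (rule sum_mono)
    fix q assume "q \<in> P"
    hence le: "real (2 * p + 1) \<le> real q" using big of_nat_mono by blast
    have "0 < real (2 * p + 1)" by simp
    hence "0 < real q" using le by linarith
    with le show "1 / real q \<le> 1 / real (2 * p + 1)"
      using \<open>0 < real (2 * p + 1)\<close> by (intro divide_left_mono) auto
  qed
  also have "\<dots> = real (card P) / real (2 * p + 1)" by simp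
  also have "\<dots> < 1 / 2"
    using cardP by (simp add: field_simps)
  finally have sumlt: "(\<Sum>q\<in>P. 1 / real q) < 1 / 2" .
  have "(\<Prod>q\<in>P. 1 - 1 / real q) \<ge> 1 - (\<Sum>q\<in>P. 1 / real q)"
  proof (rule prod_one_minus_ge[OF fin])
    fix q assume "q \<in> P"
    hence "real (2 * p + 1) \<le> real q" using big of_nat_mono by blast
    hence "1 \<le> real q" by simp
    then show "0 \<le> 1 / real q \<and> 1 / real q \<le> 1" by simp
  qed
  hence prodgt: "(\<Prod>q\<in>P. 1 - 1 / real q) > 1 / 2" using sumlt by linarith
  have "real (totient m) / real m = (\<Prod>q\<in>P. 1 - 1 / real q)"
    using m0 unfolding P_def by (simp add: totient_formula2)
  then show ?thesis using prodgt unfolding m_def by simp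
qed

theorem lemma5p2:
  shows "infinite {n::nat. odd n \<and> real (totient (2 ^ n - 1)) / real (2 ^ n - 1) > 1 / 3}"
proof -
  have "{p::nat. prime p \<and> p > 2} \<subseteq> {n::nat. odd n \<and> real (totient (2 ^ n - 1)) / real (2 ^ n - 1) > 1 / 3}"
  proof
    fix p assume "p \<in> {p::nat. prime p \<and> p > 2}"
    hence pp: "prime p" "p > 2" by auto
    hence "odd p" using prime_odd_nat by blast
    with ratio_big[OF pp(1) this] show "p \<in> {n::nat. odd n \<and> real (totient (2 ^ n - 1)) / real (2 ^ n - 1) > 1 / 3}"
      by simp
  qed
  moreover have "infinite {p::nat. prime p \<and> p > 2}"
  proof -
    have "{p::nat. prime p \<and> p > 2} = {p. prime p} - {2}" using prime_ge_2_nat by (auto simp: le_less)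
    then show ?thesis using primes_infinite by simp
  qed
  ultimately show ?thesis using infinite_super by blast
qed

end
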